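(* Let $\mathcal{A}$ be a Banach algebra such that $\mathrm{rad}(\mathcal{A})=\mathrm{rann}(\mathcal{A})$ and $\mathcal{A}/\mathrm{rad}(\mathcal{A})$ is commutative, suppose $\mathcal{A}$ has a right identity, and let $z\in\mathcal{A}$. Then the following are equivalent: (i) $L_z$ is centralizing; (ii) $L_z$ is skew centralizing; (iii) $z\in Z(\mathcal{A})$.
   Context: $\mathrm{rad}(\mathcal{A})$ is the Jacobson radical and $\mathrm{rann}(\mathcal{A})=\{c\in\mathcal{A}: ac=0\ \forall a\in\mathcal{A}\}$. $L_z(a)=za$. $Z(\mathcal{A})$ is the center. A map $T$ is centralizing if $[T(a),a]=T(a)a-aT(a)\in Z(\mathcal{A})$ for all $a$, and skew centralizing if $\langle T(a),a\rangle=T(a)a+aT(a)\in Z(\mathcal{A})$ for all $a$. *)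

theory Defs
  imports "HOL-Analysis.Analysis"
begin

text \<open>Banach algebras are modelled by the type class
  real_normed_algebra + banach (associative, not necessarily unital).\<close>

text \<open>Left quasi-regularity: a is left quasi-regular if there is b with
  b + a - b a = 0 (i.e. (1-b)(1-a) = 1 in the unitization).\<close>
definition left_quasi_regular :: "'a::ring \<Rightarrow> bool" where
  "left_quasi_regular a \<longleftrightarrow> (\<exists>b. b + a - b * a = 0)"

definition jacobson_rad :: "'a::ring set" where
  "jacobson_rad = {a. \<forall>x. left_quasi_regular (x * a)}"

definition rann :: "'a::ring set" where
  "rann = {c. \<forall>a. a * c = 0}"

definition center :: "'a::ring set" where
  "center = {c. \<forall>a. c * a = a * c}"

definition L_mult :: "'a::ring \<Rightarrow> 'a \<Rightarrow> 'a" where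
  "L_mult z a = z * a"

definition centralizing :: "('a::ring \<Rightarrow> 'a) \<Rightarrow> bool" where
  "centralizing T \<longleftrightarrow> (\<forall>a. T a * a - a * T a \<in> center)"

definition skew_centralizing :: "('a::ring \<Rightarrow> 'a) \<Rightarrow> bool" where
  "skew_centralizing T \<longleftrightarrow> (\<forall>a. T a * a + a * T a \<in> center)"

definition quotient_rad_commutative :: "'a::ring itself \<Rightarrow> bool" where
  "quotient_rad_commutative _ \<longleftrightarrow> (\<forall>a b::'a. a * b - b * a \<in> jacobson_rad)"

end

theory Submission
  imports Defs
begin

theorem theorem5p5:
  fixes z :: "'a::{real_normed_algebra, banach}"
  assumes "(jacobson_rad :: 'a set) = rann"
    and "quotient_rad_commutative TYPE('a)"
    and "\<exists>e::'a. \<forall>a. a * e = a"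
  shows "(centralizing (L_mult z) \<longleftrightarrow> skew_centralizing (L_mult z))
       \<and> (skew_centralizing (L_mult z) \<longleftrightarrow> z \<in> center)"
proof -
  have P: "x * u * v = x * v * u" for x u v :: 'a
  proof -
    have "u * v - v * u \<in> (jacobson_rad :: 'a set)"
      using assms(2) unfolding quotient_rad_commutative_def by blast
    then have "x * (u * v - v * u) = 0" using assms(1) unfolding rann_def by auto
    then show ?thesis by (simp add: right_diff_distrib mult.assoc)
  qed
  obtain e :: 'a where e: "\<And>a. a * e = a" using assms(3) by blast
  have ee: "e * e = e" by (rule e)
  have key: "z \<in> center" if ez: "e * z = z" and sq: "\<And>a. z * (a * a) = a * a * z"
  proof -
    have "z * a = a * z" for a
    proof -
      have h: "z * ((a+e) * (a+e)) = (a+e) * (a+e) * z" by (rule sq)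
      have 1: "z * (e * a) = z * a" by (metis e mult.assoc)
      have 2: "e * a * z = z * a" by (metis P ez)
      have 3: "z * (e * e) = z" "e * e * z = z" using ee e ez by auto
      from h have "z * (a * a) + z * (a * e) + z * (e * a) + z * (e * e) = a * a * z + a * e * z + e * a * z + e * e * z"
        by (simp add: algebra_simps)
      then show ?thesis using 1 2 3 sq[of a] e[of a] by simp
    qed
    then show ?thesis unfolding center_def by auto
  qed
  have zc: "z \<in> center" if c: "centralizing (L_mult z)"
  proof -
    have 0: "z * (a * a) - a * a * z = 0" for a
    proof -
      have "z * a * a - a * (z * a) \<in> center" using c unfolding centralizing_def L_mult_def by auto
      moreover have "a * (z * a) = a * a * z" by (metis P mult.assoc)
      ultimately have cc: "z * (a * a) - a * a * z \<in> center" by (simp add: mult.assoc)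
      have "x * (z * (a * a) - a * a * z) = 0" for x
        by (simp add: right_diff_distrib) (metis P mult.assoc)
      then have "e * (z * (a * a) - a * a * z) = 0" by blast
      moreover have "(z * (a * a) - a * a * z) * e = e * (z * (a * a) - a * a * z)" using cc unfolding center_def by auto
      ultimately show ?thesis using e by simp
    qed
    have "e * z = z" using 0[of e] ee e by simp
    then show ?thesis using key 0 by simp
  qed
  have zs: "z \<in> center" if c: "skew_centralizing (L_mult z)"
  proof -
    have E: "z * a * a + a * (z * a) = e * z * a * a + e * z * a * a" for a
    proof -
      have cc: "z * a * a + a * (z * a) \<in> center" using c unfolding skew_centralizing_def L_mult_def by auto
      have "z * a * a + a * (z * a) = (z * a * a + a * (z * a)) * e" using e by simp
      also have "\<dots> = e * (z * a * a + a * (z * a))" using cc unfolding center_def by auto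
      also have "\<dots> = e * z * a * a + e * a * z * a" by (simp add: algebra_simps)
      also have "e * a * z * a = e * z * a * a" by (metis P)
      finally show ?thesis .
    qed
    have "z + e * z = e * z + e * z" using E[of e] e ee by (simp add: mult.assoc)
    then have ez: "e * z = z" by simp
    have "z * (a * a) = a * a * z" for a
    proof -
      have "z * a * a + a * (z * a) = z * a * a + z * a * a" using E[of a] ez by simp
      then have "a * (z * a) = z * a * a" by simp
      moreover have "a * (z * a) = a * a * z" by (metis P mult.assoc)
      ultimately show ?thesis by (simp add: mult.assoc)
    qed
    then show ?thesis using key ez by simp
  qed
  have bck: "centralizing (L_mult z) \<and> skew_centralizing (L_mult z)" if zc: "z \<in> center"
  proof -
    have zcom: "z * b = b * z" for b using zc unfolding center_def by auto
    have A: "a * (z * a) = z * a * a" for a by (metis zcom mult.assoc)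
    have C: "z * a * a \<in> center" for a
    proof -
      have "z * a * a * b = b * (z * a * a)" for b
      proof -
        have "z * a * a * b = z * b * a * a" by (metis P)
        also have "\<dots> = b * (z * a * a)" by (metis zcom mult.assoc)
        finally show ?thesis .
      qed
      then show ?thesis unfolding center_def by auto
    qed
    have C2: "z * a * a + z * a * a \<in> center" for a
      using C[of a] unfolding center_def by (simp add: algebra_simps)
    have Z0: "(0::'a) \<in> center" unfolding center_def by simp
    show ?thesis unfolding centralizing_def skew_centralizing_def L_mult_def
      using A C2 Z0 by simp
  qed
  show ?thesis using zc zs bck by blast
qed

end
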